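(* For every integer $n\ge2$ and every prime power $q$, $$f(n,q)\ge\frac{(q^{n+1}-1)(q^{n-1}-1)}{(q^2-1)^2}.$$
   Context: $f(n,q)$ is the smallest size of a set of lines of $\mathrm{PG}(n,q)$ (the $n$-dimensional projective space over $\mathbb F_q$) such that every plane contains at least one line of the set. *)

theory Defs
  imports "HOL-Analysis.Analysis"
begin

text \<open>PG(n,F) is modelled via the vector space F^(n+1) = 'a^'n with CARD('n) = n+1.
  Projective lines are 2-dimensional linear subspaces, projective planes are
  3-dimensional linear subspaces; incidence is inclusion.\<close>

definition pg_lines :: "('a::field ^ 'n) set set" where
  "pg_lines = {l. vec.subspace l \<and> vec.dim l = 2}"

definition pg_planes :: "('a::field ^ 'n) set set" where
  "pg_planes = {p. vec.subspace p \<and> vec.dim p = 3}"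

definition f_PG :: "'a::{field,finite} itself \<Rightarrow> 'n::finite itself \<Rightarrow> nat" where
  "f_PG _ _ = (LEAST k. \<exists>L. L \<subseteq> (pg_lines :: ('a ^ 'n) set set) \<and>
       (\<forall>P\<in>(pg_planes :: ('a ^ 'n) set set). \<exists>l\<in>L. l \<subseteq> P) \<and> card L = k)"

end

theory Submission
  imports Defs
begin

lemma card_subspace:
  fixes S :: "('a::{field,finite} ^ 'n) set"
  assumes "vec.subspace S"
  shows "card S = CARD('a) ^ vec.dim S"
proof -
  obtain B where B: "B \<subseteq> S" "vec.independent B" "S \<subseteq> vec.span B" "card B = vec.dim S"
    using vec.basis_exists by blast
  have fB: "finite B" by simp
  have spB: "vec.span B = S"
    using B assms by (metis vec.span_subspace)
  let ?h = "\<lambda>u. \<Sum>v\<in>B. u v *s v"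
  have "bij_betw ?h (B \<rightarrow>\<^sub>E UNIV) S"
  proof (rule bij_betwI')
    fix u w :: "_ \<Rightarrow> 'a" assume u: "u \<in> B \<rightarrow>\<^sub>E UNIV" and w: "w \<in> B \<rightarrow>\<^sub>E UNIV"
    show "(?h u = ?h w) = (u = w)"
    proof
      assume eq: "?h u = ?h w"
      have "(\<Sum>v\<in>B. (u v - w v) *s v) = ?h u - ?h w"
        by (simp add: vec.scale_left_diff_distrib sum_subtractf)
      then have "(\<Sum>v\<in>B. (u v - w v) *s v) = 0"
        using eq by simp
      then have "\<forall>v\<in>B. u v - w v = 0"
      proof (rule contrapos_pp)
        assume "\<not> (\<forall>v\<in>B. u v - w v = 0)"
        then have "vec.dependent B" unfolding vec.dependent_finite[OF fB]
          using \<open>(\<Sum>v\<in>B. (u v - w v) *s v) = 0\<close> by (intro exI[of _ "\<lambda>v. u v - w v"]) auto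
        then show "(\<Sum>v\<in>B. (u v - w v) *s v) \<noteq> 0" using B(2) by simp
      qed
      then show "u = w" using u w by (auto simp: PiE_def extensional_def fun_eq_iff)
    qed simp
  next
    fix u :: "_ \<Rightarrow> 'a" assume "u \<in> B \<rightarrow>\<^sub>E UNIV"
    have "?h u \<in> vec.span B" using vec.span_finite[OF fB] by blast
    then show "?h u \<in> S" using spB by simp
  next
    fix x assume "x \<in> S"
    have r: "vec.span B = range ?h" by (rule vec.span_finite[OF fB])
    have "x \<in> vec.span B" using spB \<open>x \<in> S\<close> by simp
    then have "x \<in> range ?h" by (simp only: r)
    then obtain u where xu: "x = ?h u" by auto
    have eqr: "?h u = ?h (restrict u B)" by (rule sum.cong) auto
    have rin: "restrict u B \<in> B \<rightarrow>\<^sub>E UNIV" by simp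
    have e: "x = ?h (restrict u B)" using xu eqr by (rule trans)
    show "\<exists>u\<in>B \<rightarrow>\<^sub>E UNIV. x = ?h u" using e rin by blast
  qed
  then have "card S = card (B \<rightarrow>\<^sub>E (UNIV::'a set))" by (simp add: bij_betw_same_card)
  also have "\<dots> = CARD('a) ^ card B" by (simp add: card_PiE)
  finally show ?thesis using B by simp
qed

lemma card_univ_vec: "card (UNIV :: ('a::{field,finite} ^ 'n) set) = CARD('a) ^ CARD('n)"
  using card_subspace[of "UNIV :: ('a ^ 'n) set"] by (simp add: card_cart_basis)

lemma subspace_eq_dim:
  fixes X Y :: "('a::field ^ 'n) set"
  assumes "vec.subspace X" "vec.subspace Y" "X \<subseteq> Y" "vec.dim Y \<le> vec.dim X"
  shows "X = Y"
  using vec.subspace_dim_equal[OF assms] .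

lemma dim_span_insert:
  fixes S :: "('a::field ^ 'n) set"
  assumes "vec.subspace S" "w \<notin> S"
  shows "vec.dim (vec.span (insert w S)) = vec.dim S + 1"
proof -
  have "vec.span S = S" using assms(1) by (simp add: vec.span_eq_iff)
  then have "w \<notin> vec.span S" using assms(2) by (metis assms(1) vec.span_eq_iff)
  then show ?thesis using vec.dim_insert[of w S] by simp
qed

definition ilists :: "('a::field ^ 'n) set \<Rightarrow> nat \<Rightarrow> ('a ^ 'n) list set" where
  "ilists W k = {xs. length xs = k \<and> distinct xs \<and> set xs \<subseteq> W \<and> vec.independent (set xs)}"

lemma finite_ilists: "finite (ilists (W :: ('a::{field,finite} ^ 'n) set) k)"
proof (rule finite_subset)
  show "ilists W k \<subseteq> {xs. set xs \<subseteq> UNIV \<and> length xs = k}" unfolding ilists_def by auto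
qed (rule finite_lists_length_eq, simp)

lemma ilists_Suc:
  fixes W :: "('a::field ^ 'n) set"
  assumes "vec.subspace W"
  shows "ilists W (Suc k) = (\<lambda>(xs, v). v # xs) ` (SIGMA xs:ilists W k. W - vec.span (set xs))"
proof (intro equalityI subsetI)
  fix ys assume "ys \<in> ilists W (Suc k)"
  then obtain v xs where ys: "ys = v # xs" and l: "length xs = k" and d: "distinct (v # xs)"
    and s: "set (v # xs) \<subseteq> W" and i: "vec.independent (insert v (set xs))"
    unfolding ilists_def by (cases ys) auto
  have vn: "v \<notin> set xs" using d by simp
  then have "vec.independent (set xs)" "v \<notin> vec.span (set xs)"
    using i vec.independent_insert[of v "set xs"] by auto
  then have "(xs, v) \<in> (SIGMA xs:ilists W k. W - vec.span (set xs))"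
    using l d s unfolding ilists_def by auto
  then show "ys \<in> (\<lambda>(xs, v). v # xs) ` (SIGMA xs:ilists W k. W - vec.span (set xs))"
    using ys by force
next
  fix ys assume "ys \<in> (\<lambda>(xs, v). v # xs) ` (SIGMA xs:ilists W k. W - vec.span (set xs))"
  then obtain xs v where ys: "ys = v # xs" and xs: "xs \<in> ilists W k" and v: "v \<in> W" "v \<notin> vec.span (set xs)"
    by auto
  have "v \<notin> set xs" using v(2) vec.span_base by blast
  then show "ys \<in> ilists W (Suc k)"
    using xs v ys vec.independent_insert[of v "set xs"] unfolding ilists_def by auto
qed

lemma card_ilists:
  fixes W :: "('a::{field,finite} ^ 'n) set"
  assumes "vec.subspace W"
  shows "card (ilists W k) = (\<Prod>i<k. CARD('a) ^ vec.dim W - CARD('a) ^ i)"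
proof (induction k)
  case 0
  have "ilists W 0 = {[]}" unfolding ilists_def using vec.independent_empty by auto
  then show ?case by simp
next
  case (Suc k)
  let ?q = "CARD('a)"
  have inj: "inj_on (\<lambda>(xs, v). v # xs) (SIGMA xs:ilists W k. W - vec.span (set xs))"
    by (auto simp: inj_on_def)
  have "card (ilists W (Suc k)) = card (SIGMA xs:ilists W k. W - vec.span (set xs))"
    unfolding ilists_Suc[OF assms] using card_image[OF inj] .
  also have "\<dots> = (\<Sum>xs\<in>ilists W k. card (W - vec.span (set xs)))"
    by (rule card_SigmaI) (auto simp: finite_ilists)
  also have "\<dots> = (\<Sum>xs\<in>ilists W k. ?q ^ vec.dim W - ?q ^ k)"
  proof (rule sum.cong[OF refl])
    fix xs assume xs: "xs \<in> ilists W k"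
    have sub: "vec.span (set xs) \<subseteq> W"
      using xs assms vec.span_minimal[of "set xs" W] unfolding ilists_def by auto
    have "card (vec.span (set xs)) = ?q ^ vec.dim (vec.span (set xs))"
      by (rule card_subspace) simp
    also have "vec.dim (vec.span (set xs)) = k"
      using xs unfolding ilists_def by (simp add: vec.dim_eq_card_independent distinct_card)
    finally have "card (vec.span (set xs)) = ?q ^ k" .
    then show "card (W - vec.span (set xs)) = ?q ^ vec.dim W - ?q ^ k"
      using card_Diff_subset[OF _ sub] card_subspace[OF assms] by simp
  qed
  also have "\<dots> = card (ilists W k) * (?q ^ vec.dim W - ?q ^ k)" by simp
  finally show ?case using Suc by simp
qed

lemma span_ilists:
  fixes X :: "('a::field ^ 'n) set"
  assumes "vec.subspace X" "vec.dim X = k" "xs \<in> ilists X k"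
  shows "vec.span (set xs) = X"
proof (rule subspace_eq_dim)
  show "vec.span (set xs) \<subseteq> X" using assms vec.span_minimal[of "set xs" X] unfolding ilists_def by auto
  show "vec.dim X \<le> vec.dim (vec.span (set xs))"
    using assms unfolding ilists_def by (simp add: vec.dim_eq_card_independent distinct_card)
qed (use assms in auto)

definition subsp :: "('a::field ^ 'n) set \<Rightarrow> nat \<Rightarrow> ('a ^ 'n) set set" where
  "subsp W k = {X. vec.subspace X \<and> X \<subseteq> W \<and> vec.dim X = k}"

lemma count_subsp:
  fixes W :: "('a::{field,finite} ^ 'n) set"
  assumes "vec.subspace W"
  shows "card (subsp W k) * (\<Prod>i<k. CARD('a) ^ k - CARD('a) ^ i)
           = (\<Prod>i<k. CARD('a) ^ vec.dim W - CARD('a) ^ i)"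
proof -
  have eq: "ilists W k = (\<Union>X\<in>subsp W k. ilists X k)"
  proof (intro equalityI subsetI)
    fix xs assume xs: "xs \<in> ilists W k"
    have "vec.span (set xs) \<in> subsp W k"
      using xs assms vec.span_minimal[of "set xs" W] unfolding ilists_def subsp_def
      by (auto simp: vec.dim_eq_card_independent distinct_card)
    moreover have "xs \<in> ilists (vec.span (set xs)) k"
      using xs unfolding ilists_def by (auto intro: vec.span_base)
    ultimately show "xs \<in> (\<Union>X\<in>subsp W k. ilists X k)" by blast
  next
    fix xs assume "xs \<in> (\<Union>X\<in>subsp W k. ilists X k)"
    then show "xs \<in> ilists W k" unfolding ilists_def subsp_def by auto
  qed
  have "card (ilists W k) = (\<Sum>X\<in>subsp W k. card (ilists X k))"
    unfolding eq
  proof (rule card_UN_disjoint)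
    show "\<forall>X\<in>subsp W k. \<forall>Y\<in>subsp W k. X \<noteq> Y \<longrightarrow> ilists X k \<inter> ilists Y k = {}"
    proof (intro ballI impI)
      fix X Y assume X: "X \<in> subsp W k" and Y: "Y \<in> subsp W k" and ne: "X \<noteq> Y"
      show "ilists X k \<inter> ilists Y k = {}"
      proof (rule ccontr)
        assume "ilists X k \<inter> ilists Y k \<noteq> {}"
        then obtain xs where "xs \<in> ilists X k" "xs \<in> ilists Y k" by blast
        then have "vec.span (set xs) = X" "vec.span (set xs) = Y"
          using X Y span_ilists unfolding subsp_def by auto
        then show False using ne by simp
      qed
    qed
  qed (auto simp: finite_ilists)
  also have "\<dots> = (\<Sum>X\<in>subsp W k. (\<Prod>i<k. CARD('a) ^ k - CARD('a) ^ i))"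
    by (rule sum.cong[OF refl]) (simp add: card_ilists subsp_def)
  finally show ?thesis using card_ilists[OF assms, of k] by simp
qed

lemma span_insert_eq:
  fixes U P :: "('a::field ^ 'n) set"
  assumes "vec.subspace P" "vec.dim P = j + 1" "vec.subspace U" "vec.dim U = j" "U \<subseteq> P"
    "w \<in> P" "w \<notin> U"
  shows "vec.span (insert w U) = P"
proof (rule subspace_eq_dim)
  show "vec.span (insert w U) \<subseteq> P"
    using assms vec.span_minimal[of "insert w U" P] by auto
  show "vec.dim P \<le> vec.dim (vec.span (insert w U))"
    using dim_span_insert[OF assms(3,7)] assms by simp
qed (use assms in auto)

lemma count_ext:
  fixes U :: "('a::{field,finite} ^ 'n) set"
  assumes U: "vec.subspace U" "vec.dim U = j"
  shows "card {P. vec.subspace P \<and> vec.dim P = j + 1 \<and> U \<subseteq> P} * (CARD('a) ^ (j + 1) - CARD('a) ^ j)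
         = CARD('a) ^ CARD('n) - CARD('a) ^ j"
proof -
  let ?q = "CARD('a)"
  let ?H = "{P. vec.subspace P \<and> vec.dim P = j + 1 \<and> U \<subseteq> P}"
  have eq: "UNIV - U = (\<Union>P\<in>?H. P - U)"
  proof (intro equalityI subsetI)
    fix w assume w: "w \<in> UNIV - U"
    have "vec.span (insert w U) \<in> ?H"
      using dim_span_insert[OF U(1), of w] w U vec.span_superset[of "insert w U"] by auto
    moreover have "w \<in> vec.span (insert w U) - U" using w vec.span_base[of w "insert w U"] by auto
    ultimately show "w \<in> (\<Union>P\<in>?H. P - U)" by blast
  qed auto
  have "card (UNIV - U) = card (\<Union>P\<in>?H. P - U)" using eq by simp
  also have "\<dots> = (\<Sum>P\<in>?H. card (P - U))"
  proof (rule card_UN_disjoint)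
    show "\<forall>P\<in>?H. \<forall>Q\<in>?H. P \<noteq> Q \<longrightarrow> (P - U) \<inter> (Q - U) = {}"
    proof (intro ballI impI)
      fix P Q assume P: "P \<in> ?H" and Q: "Q \<in> ?H" and ne: "P \<noteq> Q"
      show "(P - U) \<inter> (Q - U) = {}"
      proof (rule ccontr)
        assume "(P - U) \<inter> (Q - U) \<noteq> {}"
        then obtain w where "w \<in> P" "w \<in> Q" "w \<notin> U" by blast
        then have "vec.span (insert w U) = P" "vec.span (insert w U) = Q"
          using P Q U span_insert_eq[of _ j U w] by auto
        then show False using ne by simp
      qed
    qed
  qed auto
  also have "\<dots> = (\<Sum>P\<in>?H. ?q ^ (j + 1) - ?q ^ j)"
  proof (rule sum.cong[OF refl])
    fix P assume P: "P \<in> ?H"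
    then show "card (P - U) = ?q ^ (j + 1) - ?q ^ j"
      using card_Diff_subset[of U P] card_subspace[of P] card_subspace[OF U(1)] U by auto
  qed
  finally show ?thesis
    using card_Diff_subset[of U UNIV] card_univ_vec card_subspace[OF U(1)] U by (simp add: mult.commute)
qed

lemma lines_meet:
  fixes l1 l2 :: "('a::{field,finite} ^ 'n) set"
  assumes l1: "l1 \<in> pg_lines" and l2: "l2 \<in> pg_lines" and ne: "l1 \<noteq> l2"
  shows "card (l1 \<inter> l2 - {0}) \<le> (CARD('a) - 1) * card {P \<in> pg_planes. l1 \<subseteq> P \<and> l2 \<subseteq> P}"
proof (cases "l1 \<inter> l2 - {0} = {}")
  case True
  then show ?thesis by (metis card.empty zero_le)
next
  case False
  let ?q = "CARD('a)"
  let ?I = "l1 \<inter> l2"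
  obtain v where v: "v \<in> l1" "v \<in> l2" "v \<noteq> 0" using False by blast
  have s1: "vec.subspace l1" "vec.dim l1 = 2" using l1 by (auto simp: pg_lines_def)
  have s2: "vec.subspace l2" "vec.dim l2 = 2" using l2 by (auto simp: pg_lines_def)
  have sI: "vec.subspace ?I" using s1 s2 by (simp add: vec.subspace_inter)
  have cI: "card ?I = ?q ^ vec.dim ?I" by (rule card_subspace[OF sI])
  have le2: "vec.dim ?I \<le> 2" using vec.dim_subset[of ?I l1] s1 by auto
  have ne2: "vec.dim ?I \<noteq> 2"
  proof
    assume d: "vec.dim ?I = 2"
    have "?I = l1" by (rule subspace_eq_dim) (use sI s1 d in auto)
    moreover have "?I = l2" by (rule subspace_eq_dim) (use sI s2 d in auto)
    ultimately show False using ne by simp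
  qed
  have ne0: "vec.dim ?I \<noteq> 0"
  proof
    assume d: "vec.dim ?I = 0"
    have "0 \<in> ?I" using vec.subspace_0[OF sI] .
    then have "{0, v} \<subseteq> ?I" using v by auto
    then have "card {0, v} \<le> card ?I" by (rule card_mono[rotated]) simp
    then show False using d cI v(3) by simp
  qed
  have d1: "vec.dim ?I = 1" using le2 ne2 ne0 by linarith
  have "0 \<in> ?I" using vec.subspace_0[OF sI] .
  then have cI0: "card (?I - {0}) = ?q - 1" using cI d1 by simp
  let ?X = "{x + y |x y. x \<in> l1 \<and> y \<in> l2}"
  have sX: "vec.subspace ?X" by (rule vec.subspace_sums[OF s1(1) s2(1)])
  have "vec.dim ?X + vec.dim ?I = 4" using vec.dim_sums_Int[OF s1(1) s2(1)] s1 s2 by simp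
  then have dX: "vec.dim ?X = 3" using d1 by simp
  have "l1 \<subseteq> ?X"
  proof
    fix x assume "x \<in> l1"
    moreover have "(0::'a^'n) \<in> l2" using s2 by (simp add: vec.subspace_0)
    ultimately show "x \<in> ?X" by force
  qed
  moreover have "l2 \<subseteq> ?X"
  proof
    fix y assume "y \<in> l2"
    moreover have "(0::'a^'n) \<in> l1" using s1 by (simp add: vec.subspace_0)
    ultimately show "y \<in> ?X" by force
  qed
  ultimately have "?X \<in> {P \<in> pg_planes. l1 \<subseteq> P \<and> l2 \<subseteq> P}"
    using sX dX by (simp add: pg_planes_def)
  then have "{P \<in> pg_planes. l1 \<subseteq> P \<and> l2 \<subseteq> P} \<noteq> {}" by blast
  then have "0 < card {P \<in> pg_planes. l1 \<subseteq> P \<and> l2 \<subseteq> P}" by (simp add: card_gt_0_iff)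
  then have "(?q - 1) * 1 \<le> (?q - 1) * card {P \<in> pg_planes. l1 \<subseteq> P \<and> l2 \<subseteq> P}"
    by (intro mult_le_mono2) simp
  then show ?thesis using cI0 by simp
qed

lemma card_distinct_pairs:
  assumes "finite A"
  shows "card {(x, y). x \<in> A \<and> y \<in> A \<and> x \<noteq> y} = card A * (card A - 1)"
proof -
  have eq: "{(x, y). x \<in> A \<and> y \<in> A \<and> x \<noteq> y} = A \<times> A - (\<lambda>x. (x, x)) ` A" by auto
  have "card (A \<times> A - (\<lambda>x. (x, x)) ` A) = card A * card A - card A"
    using card_Diff_subset[of "(\<lambda>x. (x, x)) ` A" "A \<times> A"] assms
    by (auto simp: card_cartesian_product card_image inj_on_def)
  then show ?thesis using eq by (simp add: diff_mult_distrib2)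
qed


lemma final_alg:
  fixes q x lam PL N1 :: real
  assumes q: "q \<ge> 2" and x: "x \<ge> 1"
    and N1: "N1 * (q - 1) = x - 1"
    and PL: "PL * ((q^3-1)*(q^3-q)*(q^3-q^2)) = (q^2*x-1)*(q^2*x-q)*(q^2*x-q^2)"
    and ineq: "(q-1)*(q^2*x-1)*(q^2+q+1)*PL
      \<le> (q-1)*(q^2*x-1)*(q^2+q+1)*lam*N1 - (lam*(q^2-1))^2 + (q^2*x-1)*(lam*(q^2-1))"
  shows "lam*(q^2-1)^2 \<ge> (q^2*x-1)*(x-1)"
proof (rule ccontr)
  assume neg: "\<not> ?thesis"
  define A where "A = q^2*x-1"
  define K where "K = (q^2-1)^2"
  have e1: "(q^3-1)*(q^3-q)*(q^3-q^2) = q^3*((q-1)^3*(q+1)*(q^2+q+1))" by algebra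
  have e2: "(q^2*x-1)*(q^2*x-q)*(q^2*x-q^2) = q^3*(A*(q*x-1)*(x-1))" unfolding A_def by algebra
  have "q^3*(PL*((q-1)^3*(q+1)*(q^2+q+1))) = q^3*(A*(q*x-1)*(x-1))"
    using PL unfolding e1 e2 by (simp add: ac_simps)
  then have PL2: "PL*((q-1)^3*(q+1)*(q^2+q+1)) = A*(q*x-1)*(x-1)" using q by simp
  have L: "K*((q-1)*(q^2*x-1)*(q^2+q+1)*PL) = (q+1)*A*(PL*((q-1)^3*(q+1)*(q^2+q+1)))"
    unfolding K_def A_def by algebra
  have r1: "(q-1)*(q^2*x-1)*(q^2+q+1)*lam*N1 = A*(q^2+q+1)*lam*(x-1)"
    unfolding A_def N1[symmetric] by algebra
  have key: "K*(A*(q^2+q+1)*lam*(x-1) - (lam*(q^2-1))^2 + A*(lam*(q^2-1))) - (q+1)*A*(A*(q*x-1)*(x-1))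
     = -((K*lam - A*(x-1))*(K*lam - A*(q+1)*(q*x-1)))"
    unfolding K_def A_def by algebra
  have "1 < q^2" using q by (intro one_less_power) auto
  then have Kpos: "K > 0" unfolding K_def by simp
  have "K*((q-1)*(q^2*x-1)*(q^2+q+1)*PL) \<le> K*(A*(q^2+q+1)*lam*(x-1) - (lam*(q^2-1))^2 + A*(lam*(q^2-1)))"
    using mult_left_mono[OF ineq, of K] Kpos r1 unfolding A_def by simp
  have nn: "0 \<le> -((K*lam - A*(x-1))*(K*lam - A*(q+1)*(q*x-1)))"
  proof -
    have L2: "K*((q-1)*(q^2*x-1)*(q^2+q+1)*PL) = (q+1)*A*(A*(q*x-1)*(x-1))" using L PL2 by simp
    show ?thesis using key L2 \<open>K*((q-1)*(q^2*x-1)*(q^2+q+1)*PL) \<le> _\<close> by linarith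
  qed
  have f1: "K*lam - A*(x-1) < 0" using neg unfolding K_def A_def by (simp add: mult.commute)
  have "1*1 \<le> q^2*x" by (rule mult_mono) (use q x \<open>1 < q^2\<close> in auto)
  then have A0: "A \<ge> 0" unfolding A_def by simp
  have "x - 1 \<le> (q+1)*(q*x-1)"
  proof -
    define t where "t = x*(q^2+q-1)"
    have h1: "1*(q^2+q-1) \<le> t" unfolding t_def using x q \<open>1 < q^2\<close> by (intro mult_right_mono) linarith+
    have h2: "(q+1)*(q*x-1) = (x-1) + (t - q)" unfolding t_def by algebra
    have "0 \<le> t - q" using h1 \<open>1 < q^2\<close> by simp
    then show ?thesis unfolding h2 by simp
  qed
  then have "A*(x-1) \<le> A*((q+1)*(q*x-1))" using A0 by (rule mult_left_mono)
  then have f2: "K*lam - A*(q+1)*(q*x-1) < 0" using f1 by (simp add: mult.assoc)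
  have "0 < (K*lam - A*(x-1))*(K*lam - A*(q+1)*(q*x-1))" using f1 f2 by (rule mult_neg_neg)
  then show False using nn by linarith
qed


lemma swap_card:
  assumes "finite A" "finite B"
  shows "(\<Sum>x\<in>A. card {y \<in> B. R x y}) = (\<Sum>y\<in>B. card {x \<in> A. R x y})"
  using sum.swap_restrict[OF assms, of "\<lambda>_ _. (1::nat)" R] by simp

lemma real_diff_pow:
  assumes "(1::nat) \<le> q" "i \<le> k"
  shows "real (q ^ k - q ^ i) = real q ^ k - real q ^ i"
proof -
  have "q ^ i \<le> q ^ k" using assms by (simp add: power_increasing)
  then show ?thesis by (simp add: of_nat_diff)
qed

lemma real_mult_pred: "real (d * (d - 1)) = real d * (real d - 1)"
  by (cases d) (auto simp: algebra_simps)

theorem lemma4p3: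
  fixes n q :: nat
  assumes "n \<ge> 2"
    and "CARD('n::finite) = n + 1"
    and "CARD('a::{field,finite}) = q"
  shows "real (f_PG TYPE('a) TYPE('n))
           \<ge> ((real q ^ (n + 1) - 1) * (real q ^ (n - 1) - 1)) / (real q ^ 2 - 1) ^ 2"
proof -
  define Q where "Q = real q"
  define x where "x = Q ^ (n - 1)"
  have "card {0::'a, 1} \<le> CARD('a)" by (rule card_mono) auto
  then have q2: "q \<ge> 2" using assms(3) by simp
  then have Q2: "Q \<ge> 2" unfolding Q_def by simp
  have q1: "(1::nat) \<le> q" using q2 by simp
  have nn: "n + 1 = 2 + (n - 1)" using assms(1) by simp
  have Qm: "Q ^ (n + 1) = Q^2 * x" unfolding x_def nn power_add ..
  have x1: "x \<ge> 1" unfolding x_def using Q2 by (simp add: one_le_power)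
  have nlines: "real (card (subsp P 2)) = Q^2 + Q + 1" if P: "P \<in> (pg_planes :: ('a^'n) set set)" for P
  proof -
    have sP: "vec.subspace P" "vec.dim P = 3" using P by (auto simp: pg_planes_def)
    have "card (subsp P 2) * (\<Prod>i<2. CARD('a) ^ 2 - CARD('a) ^ i) = (\<Prod>i<2. CARD('a) ^ vec.dim P - CARD('a) ^ i)"
      by (rule count_subsp[OF sP(1)])
    then have e: "card (subsp P 2) * ((q^2 - q^0) * (q^2 - q^1)) = (q^3 - q^0) * (q^3 - q^1)"
      using sP assms(3) by (simp add: numeral_2_eq_2)
    have "real (card (subsp P 2) * ((q^2 - q^0) * (q^2 - q^1))) = real ((q^3 - q^0) * (q^3 - q^1))"
      using e by (rule arg_cong)
    moreover have d: "real (q^2 - q^0) = Q^2 - Q^0" "real (q^2 - q^1) = Q^2 - Q^1"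
      "real (q^3 - q^0) = Q^3 - Q^0" "real (q^3 - q^1) = Q^3 - Q^1"
      using real_diff_pow[OF q1, of 0 2] real_diff_pow[OF q1, of 1 2] real_diff_pow[OF q1, of 0 3]
        real_diff_pow[OF q1, of 1 3] unfolding Q_def by simp_all
    ultimately have "real (card (subsp P 2)) * ((Q^2 - Q^0) * (Q^2 - Q^1)) = (Q^3 - Q^0) * (Q^3 - Q^1)"
      unfolding of_nat_mult by simp
    then have "real (card (subsp P 2)) * ((Q^2 - 1) * (Q^2 - Q)) = (Q^3 - 1) * (Q^3 - Q)"
      by simp
    also have "\<dots> = (Q^2 + Q + 1) * ((Q^2 - 1) * (Q^2 - Q))" by algebra
    finally have "real (card (subsp P 2)) * ((Q^2 - 1) * (Q^2 - Q)) = (Q^2 + Q + 1) * ((Q^2 - 1) * (Q^2 - Q))" .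
    moreover have "(Q^2 - 1) * (Q^2 - Q) \<noteq> 0"
    proof -
      have "1 < Q^2" using Q2 by (intro one_less_power) auto
      moreover have "Q < Q^2" using Q2 by (simp add: power2_eq_square)
      ultimately show ?thesis by simp
    qed
    ultimately show ?thesis by simp
  qed
  have plane_has_line: "\<exists>l\<in>pg_lines. l \<subseteq> P" if P: "P \<in> (pg_planes :: ('a^'n) set set)" for P
  proof -
    have "real (card (subsp P 2)) > 0" using nlines[OF P] Q2 by (smt (verit) zero_le_power2)
    then have "subsp P 2 \<noteq> {}" by (metis card.empty of_nat_0 less_irrefl)
    then obtain X where "X \<in> subsp P 2" by blast
    then show ?thesis unfolding subsp_def pg_lines_def by blast
  qed
  have ex: "\<exists>k. \<exists>L. L \<subseteq> (pg_lines :: ('a^'n) set set) \<and> (\<forall>P\<in>(pg_planes :: ('a^'n) set set). \<exists>l\<in>L. l \<subseteq> P) \<and> card L = k"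
    using plane_has_line by blast
  obtain L where L: "L \<subseteq> (pg_lines :: ('a^'n) set set)" "\<forall>P\<in>(pg_planes :: ('a^'n) set set). \<exists>l\<in>L. l \<subseteq> P"
      "card L = f_PG TYPE('a) TYPE('n)"
    using LeastI_ex[OF ex] unfolding f_PG_def by blast

  define Pl where "Pl = (pg_planes :: ('a^'n) set set)"
  define N where "N = (UNIV - {0} :: ('a^'n) set)"
  define DP where "DP = {(l1, l2). l1 \<in> L \<and> l2 \<in> L \<and> l1 \<noteq> l2}"
  define c where "c \<pi> = card {l \<in> L. l \<subseteq> \<pi>}" for \<pi> :: "('a^'n) set"
  define d where "d v = card {l \<in> L. v \<in> l}" for v :: "'a^'n"
  define lam where "lam = real (card L)"
  define PL where "PL = real (card Pl)"
  define s where "s = Q^2 + Q + 1"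
  define M where "M = Q^2 * x - 1"
  define N1 where "N1 = (x - 1) / (Q - 1)"
  have finL: "finite L" and finPl: "finite Pl" and finN: "finite N" and finDP: "finite DP"
    by simp_all
  have Lsub: "vec.subspace l" "vec.dim l = 2" if "l \<in> L" for l
    using L(1) that by (auto simp: pg_lines_def)
  have N1l: "real (card {\<pi> \<in> Pl. l \<subseteq> \<pi>}) = N1" if l: "l \<in> L" for l
  proof -
    have eqs: "{\<pi> \<in> Pl. l \<subseteq> \<pi>} = {P. vec.subspace P \<and> vec.dim P = 2 + 1 \<and> l \<subseteq> P}"
      unfolding Pl_def pg_planes_def by auto
    have e: "card {\<pi> \<in> Pl. l \<subseteq> \<pi>} * (q ^ (2 + 1) - q ^ 2) = q ^ (n + 1) - q ^ 2"
      using count_ext[OF Lsub[OF l]] assms(2,3) unfolding eqs by simp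
    have "real (card {\<pi> \<in> Pl. l \<subseteq> \<pi>} * (q ^ (2 + 1) - q ^ 2)) = real (q ^ (n + 1) - q ^ 2)"
      using e by (rule arg_cong)
    moreover have "real (q ^ (2 + 1) - q ^ 2) = Q^(2+1) - Q^2" "real (q ^ (n + 1) - q ^ 2) = Q^(n+1) - Q^2"
      using real_diff_pow[OF q1, of 2 "2+1"] real_diff_pow[OF q1, of 2 "n+1"] assms(1) unfolding Q_def by simp_all
    ultimately have "real (card {\<pi> \<in> Pl. l \<subseteq> \<pi>}) * (Q^(2+1) - Q^2) = Q^(n+1) - Q^2"
      unfolding of_nat_mult by simp
    moreover have e3: "Q^(2+1) - Q^2 = Q^2*(Q-1)" by (simp add: power_add algebra_simps power2_eq_square)
    ultimately have e4: "real (card {\<pi> \<in> Pl. l \<subseteq> \<pi>}) * (Q^2*(Q-1)) = Q^2*x - Q^2"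
      unfolding Qm by simp
    have "Q^2 * (real (card {\<pi> \<in> Pl. l \<subseteq> \<pi>}) * (Q - 1)) = real (card {\<pi> \<in> Pl. l \<subseteq> \<pi>}) * (Q^2*(Q-1))"
      by (simp add: ac_simps)
    also have "\<dots> = Q^2 * (x - 1)" unfolding e4 by (simp add: algebra_simps)
    finally have "Q^2 * (real (card {\<pi> \<in> Pl. l \<subseteq> \<pi>}) * (Q - 1)) = Q^2 * (x - 1)" .
    then have "real (card {\<pi> \<in> Pl. l \<subseteq> \<pi>}) * (Q - 1) = x - 1" using Q2 by simp
    then show ?thesis unfolding N1_def using Q2 by (simp add: field_simps)
  qed
  have A: "(\<Sum>\<pi>\<in>Pl. real (c \<pi>)) = lam * N1"
  proof -
    have "(\<Sum>\<pi>\<in>Pl. c \<pi>) = (\<Sum>l\<in>L. card {\<pi> \<in> Pl. l \<subseteq> \<pi>})"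
      unfolding c_def by (rule swap_card[OF finPl finL])
    then have "real (\<Sum>\<pi>\<in>Pl. c \<pi>) = real (\<Sum>l\<in>L. card {\<pi> \<in> Pl. l \<subseteq> \<pi>})"
      by (rule arg_cong)
    then have "(\<Sum>\<pi>\<in>Pl. real (c \<pi>)) = (\<Sum>l\<in>L. real (card {\<pi> \<in> Pl. l \<subseteq> \<pi>}))"
      by (simp only: of_nat_sum)
    also have "\<dots> = (\<Sum>l\<in>L. N1)" using N1l by simp
    finally show ?thesis unfolding lam_def by simp
  qed
  have B: "(\<Sum>\<pi>\<in>Pl. c \<pi> * (c \<pi> - 1)) = (\<Sum>p\<in>DP. card {\<pi> \<in> Pl. fst p \<subseteq> \<pi> \<and> snd p \<subseteq> \<pi>})"
  proof -
    have "c \<pi> * (c \<pi> - 1) = card {p \<in> DP. fst p \<subseteq> \<pi> \<and> snd p \<subseteq> \<pi>}" for \<pi>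
    proof -
      have "{p \<in> DP. fst p \<subseteq> \<pi> \<and> snd p \<subseteq> \<pi>}
          = {(a, b). a \<in> {l \<in> L. l \<subseteq> \<pi>} \<and> b \<in> {l \<in> L. l \<subseteq> \<pi>} \<and> a \<noteq> b}"
        unfolding DP_def by auto
      then show ?thesis unfolding c_def using card_distinct_pairs[of "{l \<in> L. l \<subseteq> \<pi>}"] by simp
    qed
    then have "(\<Sum>\<pi>\<in>Pl. c \<pi> * (c \<pi> - 1)) = (\<Sum>\<pi>\<in>Pl. card {p \<in> DP. fst p \<subseteq> \<pi> \<and> snd p \<subseteq> \<pi>})"
      by simp
    also have "\<dots> = (\<Sum>p\<in>DP. card {\<pi> \<in> Pl. fst p \<subseteq> \<pi> \<and> snd p \<subseteq> \<pi>})"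
      by (rule swap_card[OF finPl finDP])
    finally show ?thesis .
  qed
  have C: "(\<Sum>v\<in>N. d v * (d v - 1)) \<le> (q - 1) * (\<Sum>\<pi>\<in>Pl. c \<pi> * (c \<pi> - 1))"
  proof -
    have "d v * (d v - 1) = card {p \<in> DP. v \<in> fst p \<and> v \<in> snd p}" for v
    proof -
      have "{p \<in> DP. v \<in> fst p \<and> v \<in> snd p}
          = {(a, b). a \<in> {l \<in> L. v \<in> l} \<and> b \<in> {l \<in> L. v \<in> l} \<and> a \<noteq> b}"
        unfolding DP_def by auto
      then show ?thesis unfolding d_def using card_distinct_pairs[of "{l \<in> L. v \<in> l}"] by simp
    qed
    then have "(\<Sum>v\<in>N. d v * (d v - 1)) = (\<Sum>v\<in>N. card {p \<in> DP. v \<in> fst p \<and> v \<in> snd p})"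
      by simp
    also have "\<dots> = (\<Sum>p\<in>DP. card {v \<in> N. v \<in> fst p \<and> v \<in> snd p})"
      by (rule swap_card[OF finN finDP])
    also have "\<dots> \<le> (\<Sum>p\<in>DP. (q - 1) * card {\<pi> \<in> Pl. fst p \<subseteq> \<pi> \<and> snd p \<subseteq> \<pi>})"
    proof (rule sum_mono)
      fix p assume p: "p \<in> DP"
      then obtain l1 l2 where p12: "p = (l1, l2)" "l1 \<in> L" "l2 \<in> L" "l1 \<noteq> l2"
        unfolding DP_def by auto
      have "{v \<in> N. v \<in> fst p \<and> v \<in> snd p} = l1 \<inter> l2 - {0}" unfolding N_def p12 by auto
      then show "card {v \<in> N. v \<in> fst p \<and> v \<in> snd p} \<le> (q - 1) * card {\<pi> \<in> Pl. fst p \<subseteq> \<pi> \<and> snd p \<subseteq> \<pi>}"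
        using lines_meet[of l1 l2] p12 L(1) assms(3) unfolding Pl_def by auto
    qed
    also have "\<dots> = (q - 1) * (\<Sum>\<pi>\<in>Pl. c \<pi> * (c \<pi> - 1))"
      unfolding B by (simp add: sum_distrib_left)
    finally show ?thesis .
  qed
  have D: "(\<Sum>v\<in>N. real (d v)) = lam * (Q^2 - 1)"
  proof -
    have "(\<Sum>v\<in>N. d v) = (\<Sum>l\<in>L. card {v \<in> N. v \<in> l})"
      unfolding d_def by (rule swap_card[OF finN finL])
    also have "\<dots> = (\<Sum>l\<in>L. q^2 - 1)"
    proof (rule sum.cong[OF refl])
      fix l assume l: "l \<in> L"
      have "{v \<in> N. v \<in> l} = l - {0}" unfolding N_def by auto
      moreover have "0 \<in> l" using vec.subspace_0[OF Lsub(1)[OF l]] .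
      moreover have "card l = q^2" using card_subspace[OF Lsub(1)[OF l]] Lsub(2)[OF l] assms(3) by simp
      ultimately show "card {v \<in> N. v \<in> l} = q^2 - 1" by simp
    qed
    finally have "(\<Sum>v\<in>N. d v) = card L * (q^2 - 1)" by simp
    then have "real (\<Sum>v\<in>N. d v) = real (card L * (q^2 - 1))" by (rule arg_cong)
    moreover have "real (q^2 - 1) = Q^2 - 1"
      using real_diff_pow[OF q1, of 0 2] unfolding Q_def by simp
    ultimately show ?thesis unfolding lam_def by simp
  qed
  have E: "s * PL \<le> s * (\<Sum>\<pi>\<in>Pl. real (c \<pi>)) - (\<Sum>\<pi>\<in>Pl. real (c \<pi>) * (real (c \<pi>) - 1))"
  proof -
    have "s \<le> s * real (c \<pi>) - real (c \<pi>) * (real (c \<pi>) - 1)" if P: "\<pi> \<in> Pl" for \<pi>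
    proof -
      have "{l \<in> L. l \<subseteq> \<pi>} \<noteq> {}" using L(2) P unfolding Pl_def by blast
      then have c1: "1 \<le> real (c \<pi>)" unfolding c_def by (simp add: Suc_leI card_gt_0_iff)
      have "{l \<in> L. l \<subseteq> \<pi>} \<subseteq> subsp \<pi> 2" using L(1) unfolding subsp_def pg_lines_def by auto
      then have "c \<pi> \<le> card (subsp \<pi> 2)" unfolding c_def by (rule card_mono[rotated]) simp
      then have c2: "real (c \<pi>) \<le> s" using nlines[of \<pi>] P unfolding s_def Pl_def
        by (metis of_nat_le_iff)
      have "0 \<le> (real (c \<pi>) - 1) * (s - real (c \<pi>))" using c1 c2 by simp
      then show ?thesis by (simp add: algebra_simps)
    qed
    then have "(\<Sum>\<pi>\<in>Pl. s) \<le> (\<Sum>\<pi>\<in>Pl. s * real (c \<pi>) - real (c \<pi>) * (real (c \<pi>) - 1))"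
      by (rule sum_mono)
    then show ?thesis unfolding PL_def by (simp add: sum_subtractf sum_distrib_left mult.commute)
  qed
  have F: "PL * ((Q^3-1)*(Q^3-Q)*(Q^3-Q^2)) = (Q^2*x-1)*(Q^2*x-Q)*(Q^2*x-Q^2)"
  proof -
    have eqs: "subsp UNIV 3 = Pl" unfolding subsp_def Pl_def pg_planes_def by auto
    have "card (subsp (UNIV :: ('a^'n) set) 3) * (\<Prod>i<3. CARD('a) ^ 3 - CARD('a) ^ i)
        = (\<Prod>i<3. CARD('a) ^ vec.dim (UNIV :: ('a^'n) set) - CARD('a) ^ i)"
      by (rule count_subsp) simp
    then have e: "card Pl * ((q^3 - q^0) * (q^3 - q^1) * (q^3 - q^2))
        = (q^(n+1) - q^0) * (q^(n+1) - q^1) * (q^(n+1) - q^2)"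
      unfolding eqs using assms(2,3) by (simp add: numeral_3_eq_3 card_cart_basis power2_eq_square)
    have "real (card Pl * ((q^3 - q^0) * (q^3 - q^1) * (q^3 - q^2)))
        = real ((q^(n+1) - q^0) * (q^(n+1) - q^1) * (q^(n+1) - q^2))"
      using e by (rule arg_cong)
    moreover have "real (q^3 - q^0) = Q^3 - Q^0" "real (q^3 - q^1) = Q^3 - Q^1" "real (q^3 - q^2) = Q^3 - Q^2"
      "real (q^(n+1) - q^0) = Q^(n+1) - Q^0" "real (q^(n+1) - q^1) = Q^(n+1) - Q^1"
      "real (q^(n+1) - q^2) = Q^(n+1) - Q^2"
      using real_diff_pow[OF q1, of 0 3] real_diff_pow[OF q1, of 1 3] real_diff_pow[OF q1, of 2 3]
        real_diff_pow[OF q1, of 0 "n+1"] real_diff_pow[OF q1, of 1 "n+1"] real_diff_pow[OF q1, of 2 "n+1"]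
        assms(1) unfolding Q_def by simp_all
    ultimately have "PL * ((Q^3 - Q^0) * (Q^3 - Q^1) * (Q^3 - Q^2))
        = (Q^(n+1) - Q^0) * (Q^(n+1) - Q^1) * (Q^(n+1) - Q^2)"
      unfolding of_nat_mult PL_def by simp
    then show ?thesis unfolding Qm by simp
  qed
  have G: "(\<Sum>v\<in>N. real (d v))^2 \<le> (\<Sum>v\<in>N. (real (d v))^2) * M"
  proof -
    have "(\<Sum>v\<in>N. real (d v) * 1)^2 \<le> (\<Sum>v\<in>N. (real (d v))^2) * (\<Sum>v\<in>N. 1^2)"
      by (rule Cauchy_Schwarz_ineq_sum)
    moreover have "card N = q^(n+1) - 1"
      unfolding N_def using card_univ_vec[where 'a='a and 'n='n] assms(2,3)
      by (simp add: card_Diff_singleton)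
    moreover have "real (q^(n+1) - 1) = M"
      using real_diff_pow[OF q1, of 0 "n+1"] unfolding M_def Q_def[symmetric] Qm[symmetric] by simp
    ultimately show ?thesis by simp
  qed
  define S1 where "S1 = (\<Sum>\<pi>\<in>Pl. real (c \<pi>))"
  define S2 where "S2 = (\<Sum>\<pi>\<in>Pl. real (c \<pi>) * (real (c \<pi>) - 1))"
  define T where "T = (\<Sum>v\<in>N. real (d v) * (real (d v) - 1))"
  define Dd where "Dd = (\<Sum>v\<in>N. real (d v))"
  define Ee where "Ee = (\<Sum>v\<in>N. (real (d v))^2)"
  have eqT: "T = Ee - Dd" unfolding T_def Ee_def Dd_def
    by (simp add: sum_subtractf power2_eq_square algebra_simps)
  have CT: "T \<le> (Q - 1) * S2"
  proof -
    have "real (\<Sum>v\<in>N. d v * (d v - 1)) \<le> real ((q - 1) * (\<Sum>\<pi>\<in>Pl. c \<pi> * (c \<pi> - 1)))"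
      using C by (rule of_nat_mono)
    moreover have "real (q - 1) = Q - 1" unfolding Q_def using q1 by (simp add: of_nat_diff)
    moreover have "real (\<Sum>v\<in>N. d v * (d v - 1)) = T" unfolding T_def of_nat_sum real_mult_pred ..
    moreover have "real (\<Sum>\<pi>\<in>Pl. c \<pi> * (c \<pi> - 1)) = S2" unfolding S2_def of_nat_sum real_mult_pred ..
    ultimately show ?thesis by (simp only: of_nat_mult)
  qed
  have Mpos: "M \<ge> 0"
  proof -
    have "1 * 1 \<le> Q^2 * x" using Q2 x1 by (intro mult_mono) (auto simp: one_le_power)
    then show ?thesis unfolding M_def by simp
  qed
  have Q1: "Q - 1 \<ge> 0" using Q2 by simp
  have i1: "(Q-1)*M*(s*PL) \<le> (Q-1)*M*(s*S1 - S2)"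
    using E Q1 Mpos unfolding S1_def S2_def by (intro mult_left_mono) auto
  have i2: "M*T \<le> M*((Q-1)*S2)" using CT Mpos by (rule mult_left_mono)
  have i3: "Dd^2 \<le> Ee * M" using G unfolding Dd_def Ee_def .
  have ineq: "(Q-1)*(Q^2*x-1)*(Q^2+Q+1)*PL
      \<le> (Q-1)*(Q^2*x-1)*(Q^2+Q+1)*lam*N1 - (lam*(Q^2-1))^2 + (Q^2*x-1)*(lam*(Q^2-1))"
  proof -
    have r1: "(Q-1)*(Q^2*x-1)*(Q^2+Q+1)*PL = (Q-1)*M*(s*PL)" unfolding M_def s_def by (simp add: ac_simps)
    have r2: "(Q-1)*(Q^2*x-1)*(Q^2+Q+1)*lam*N1 = (Q-1)*M*(s*S1)"
      unfolding M_def s_def S1_def A by (simp add: ac_simps)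
    have r3: "(lam*(Q^2-1))^2 = Dd^2" unfolding Dd_def D ..
    have r4: "(Q^2*x-1)*(lam*(Q^2-1)) = M*Dd" unfolding M_def Dd_def D ..
    have r5: "(Q-1)*M*(s*S1 - S2) = (Q-1)*M*(s*S1) - M*((Q-1)*S2)" by (simp add: algebra_simps)
    have r6: "M*T = M*Ee - M*Dd" unfolding eqT by (simp add: algebra_simps)
    have r7: "Ee * M = M * Ee" by simp
    show ?thesis unfolding r1 r2 r3 r4 using i1 i2 i3 r5 r6 r7 by linarith
  qed
  have fin: "lam*(Q^2-1)^2 \<ge> (Q^2*x-1)*(x-1)"
    by (rule final_alg[OF Q2 x1 _ F ineq]) (unfold N1_def, use Q2 in simp)
  have Kp: "(Q^2-1)^2 > 0"
  proof -
    have "1 < Q^2" using Q2 by (intro one_less_power) auto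
    then show ?thesis by simp
  qed
  have "((Q ^ (n + 1) - 1) * (Q ^ (n - 1) - 1)) / (Q ^ 2 - 1) ^ 2 \<le> lam"
    unfolding Qm x_def[symmetric] using fin Kp by (simp add: pos_divide_le_eq)
  then show ?thesis unfolding lam_def Q_def L(3) .
qed

end
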